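(* Let $q>2$ be a prime power. In $\mathrm{PG}(2,q^2)$ there exists a semioval $\mathcal{S}\subset\mathcal{H}_q$ of size $k$ for every integer $k$ satisfying $q^3+1\geq k\geq\frac{q^3+2q^2-q+2}{2}$ if $q$ is odd, and $q^3+1\geq k\geq\frac{q^3+3q^2-2q+2}{2}$ if $q$ is even.
   Context: $\mathrm{PG}(2,q^2)$ is the Desarguesian projective plane over $\mathbb{F}_{q^2}$. $\mathcal{H}_q$ denotes the Hermitian curve, the set of points of $\mathrm{PG}(2,q^2)$ satisfying $X_2X_0^q+X_2^qX_0+X_1^{q+1}=0$ (it has $q^3+1$ points). A semioval is a non-empty pointset $\mathcal{S}$ such that for every $P\in\mathcal{S}$ there is a unique line $t_P$ with $\mathcal{S}\cap t_P=\{P\}$. *)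

theory Defs
  imports "HOL-Number_Theory.Number_Theory"
begin

(* Homogeneous coordinates (X0,X1,X2) over a field; PG(2,F) = nonzero vectors up to scalars. *)
type_synonym 'a vec3 = "'a \<times> 'a \<times> 'a"

definition smul3 :: "'a::field \<Rightarrow> 'a vec3 \<Rightarrow> 'a vec3" where
  "smul3 c v = (case v of (x0, x1, x2) \<Rightarrow> (c * x0, c * x1, c * x2))"

definition dot3 :: "'a::field vec3 \<Rightarrow> 'a vec3 \<Rightarrow> 'a" where
  "dot3 u v = (case u of (u0, u1, u2) \<Rightarrow> case v of (v0, v1, v2) \<Rightarrow> u0 * v0 + u1 * v1 + u2 * v2)"

definition proj_pt :: "'a::field vec3 \<Rightarrow> 'a vec3 set" where
  "proj_pt v = {smul3 c v | c. c \<noteq> 0}"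

definition pg_points :: "'a::field vec3 set set" where
  "pg_points = {proj_pt v | v. v \<noteq> (0, 0, 0)}"

definition pg_line :: "'a::field vec3 \<Rightarrow> 'a vec3 set set" where
  "pg_line u = {proj_pt v | v. v \<noteq> (0, 0, 0) \<and> dot3 u v = 0}"

definition pg_lines :: "'a::field vec3 set set set" where
  "pg_lines = {pg_line u | u. u \<noteq> (0, 0, 0)}"

definition hermitian_curve :: "nat \<Rightarrow> 'a::field vec3 set set" where
  "hermitian_curve q = {proj_pt (x0, x1, x2) | x0 x1 x2.
      (x0, x1, x2) \<noteq> (0, 0, 0) \<and> x2 * x0 ^ q + x2 ^ q * x0 + x1 ^ (q + 1) = 0}"

definition semioval :: "'a::field vec3 set set \<Rightarrow> bool" where
  "semioval S \<longleftrightarrow> S \<noteq> {} \<and> S \<subseteq> pg_points \<and>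
     (\<forall>P\<in>S. \<exists>!l. l \<in> pg_lines \<and> S \<inter> l = {P})"

end

theory Submission
  imports Defs "HOL-Computational_Algebra.Polynomial"
begin

lemma card_pow_roots:
  fixes a b :: "'a::field"
  assumes "n \<ge> 2"
  shows "card {x. x ^ n = a * x + b} \<le> n"
proof -
  let ?p = "monom (1::'a) n + [:-b, -a:]"
  have dg: "degree ?p = n"
  proof -
    have "degree [:-b, -a:] \<le> 1" by (simp add: degree_pCons_le)
    hence "degree [:-b,-a:] < degree (monom (1::'a) n)" using assms by (simp add: degree_monom_eq)
    thus ?thesis by (simp add: degree_add_eq_left degree_monom_eq)
  qed
  hence "?p \<noteq> 0" using assms by auto
  hence "card {x. poly ?p x = 0} \<le> degree ?p" by (rule card_poly_roots_bound)
  moreover have "{x. poly ?p x = 0} = {x. x ^ n = a * x + b}"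
    by (auto simp: poly_monom algebra_simps)
  ultimately show ?thesis using dg by simp
qed

lemma power_card_same:
  fixes x :: "'a :: {finite,field}"
  shows   "x ^ card (UNIV :: 'a set) = x"
proof (cases "x = 0")
  case False
  have "x * (\<Prod>y\<in>UNIV-{0}. x * y) = x * x ^ (card (UNIV :: 'a set) - 1) * \<Prod>(UNIV-{0})"
    by (simp add: prod.distrib mult_ac)
  also have "x * x ^ (card (UNIV :: 'a set) - 1) = x ^ Suc (card (UNIV :: 'a set) - 1)"
    by (subst power_Suc) auto
  also have "Suc (card (UNIV :: 'a set) - 1) = card (UNIV :: 'a set)"
    using finite_UNIV_card_ge_0[where ?'a = 'a] by simp
  also have "(\<Prod>y\<in>UNIV-{0}. x * y) = (\<Prod>y\<in>UNIV-{0}. y)"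
    by (rule prod.reindex_bij_witness[of _ "\<lambda>y. y / x" "\<lambda>y. x * y"]) (use False in auto)
  finally show ?thesis
    by simp
qed (use finite_UNIV_card_ge_0[where ?'a = 'a] in auto)

lemma fiber_count:
  fixes f :: "'b \<Rightarrow> 'c" and A :: "'b set"
  assumes "finite A"
  assumes "\<And>c. c \<in> f ` A \<Longrightarrow> card {x\<in>A. f x = c} = m"
  shows "card A = card (f ` A) * m"
proof -
  have "card A = card (\<Union>c\<in>f ` A. {x\<in>A. f x = c})" by (rule arg_cong[where f=card]) auto
  also have "\<dots> = (\<Sum>c\<in>f ` A. card {x\<in>A. f x = c})"
    by (rule card_UN_disjoint) (use assms(1) in auto)
  also have "\<dots> = card (f ` A) * m" using assms(2) by simp
  finally show ?thesis .
qed

locale hq =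
  fixes q :: nat and sig :: "'a::{finite,field} \<Rightarrow> 'a"
  assumes card_F: "card (UNIV :: 'a set) = q ^ 2"
    and q3: "q \<ge> 3"
    and sig_def: "sig x = x ^ q"
    and fresh: "(x + y) ^ q = x ^ q + y ^ q"
begin

lemma sig_add: "sig (x + y) = sig x + sig y" by (simp add: sig_def fresh)
lemma sig_mult: "sig (x * y) = sig x * sig y" by (simp add: sig_def power_mult_distrib)
lemma sig_0[simp]: "sig 0 = 0" using q3 by (simp add: sig_def)
lemma sig_1[simp]: "sig 1 = 1" by (simp add: sig_def)
lemma sig_sig[simp]: "sig (sig x) = x"
proof -
  have "sig (sig x) = x ^ (q * q)" by (simp add: sig_def power_mult)
  also have "q * q = card (UNIV :: 'a set)" by (simp add: card_F power2_eq_square)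
  finally show ?thesis by (simp add: power_card_same)
qed
lemma sig_uminus: "sig (- x) = - sig x"
proof -
  have "sig x + sig (- x) = 0" using sig_add[of x "-x"] by simp
  thus ?thesis by (metis add.commute eq_neg_iff_add_eq_0)
qed
lemma sig_diff: "sig (x - y) = sig x - sig y"
  using sig_add[of x "-y"] by (simp add: sig_uminus)
lemma sig_inj: "sig x = sig y \<longleftrightarrow> x = y" by (metis sig_sig)
lemma sig_eq0[simp]: "sig x = 0 \<longleftrightarrow> x = 0" by (metis sig_0 sig_sig)
lemma sig_inverse: "sig (inverse x) = inverse (sig x)"
proof (cases "x = 0")
  case False
  have "sig (inverse x) * sig x = 1" using False by (simp flip: sig_mult)
  thus ?thesis using False by (simp add: field_simps)
qed simp
lemma sig_divide: "sig (x / y) = sig x / sig y"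
  by (simp add: divide_inverse sig_mult sig_inverse)

definition T :: "'a \<Rightarrow> 'a" where "T z = z + sig z"
definition N :: "'a \<Rightarrow> 'a" where "N x = x * sig x"
definition F0 :: "'a set" where "F0 = {c. sig c = c}"

lemma T_F0: "T z \<in> F0" by (simp add: T_def F0_def sig_add add.commute)
lemma N_F0: "N z \<in> F0" by (simp add: N_def F0_def sig_mult mult.commute)
lemma N_0_iff: "N x = 0 \<longleftrightarrow> x = 0" by (simp add: N_def)
lemma N_mult: "N (x * y) = N x * N y" by (simp add: N_def sig_mult mult_ac)

lemma card_F0_le: "card F0 \<le> q"
  using card_pow_roots[of q 1 0] q3 by (simp add: F0_def sig_def)

definition KT :: "'a set" where "KT = {z. sig z = - z}"
lemma card_KT_le: "card KT \<le> q"
  using card_pow_roots[of q "-1" 0] q3 by (simp add: KT_def sig_def)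

definition KN :: "'a set" where "KN = {z. N z = 1}"
lemma card_KN_le: "card KN \<le> q + 1"
proof -
  have "KN = {z. z ^ (q+1) = 0 * z + 1}" by (simp add: KN_def N_def sig_def power_Suc2 mult.commute)
  thus ?thesis using card_pow_roots[of "q+1" 0 1] q3 by simp
qed

lemma T_fiber: assumes "T z0 = c" shows "{z. T z = c} = (\<lambda>k. z0 + k) ` KT"
proof -
  have "z \<in> (\<lambda>k. z0 + k) ` KT" if "T z = c" for z
  proof -
    have "z - z0 \<in> KT" using that assms by (auto simp: T_def KT_def sig_diff algebra_simps)
    thus ?thesis by (intro image_eqI[of _ _ "z - z0"]) auto
  qed
  moreover have "T (z0 + k) = c" if "k \<in> KT" for k
    using that assms by (auto simp: T_def KT_def sig_add)
  ultimately show ?thesis by blast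
qed

lemma card_T_fiber: "T z0 = c \<Longrightarrow> card {z. T z = c} = card KT"
  by (simp add: T_fiber card_image inj_on_def)

lemma N_fiber: assumes "N w0 = c" "w0 \<noteq> 0" shows "{w. N w = c} = (\<lambda>k. w0 * k) ` KN"
proof -
  have "w \<in> (\<lambda>k. w0 * k) ` KN" if "N w = c" for w
  proof -
    have "N w0 \<noteq> 0" using assms N_0_iff by auto
    have "N (w / w0) = N w / N w0" by (simp add: N_def sig_divide)
    hence "N (w / w0) = 1" using that assms \<open>N w0 \<noteq> 0\<close> by simp
    hence "w / w0 \<in> KN" by (simp add: KN_def)
    thus ?thesis using assms(2) by (intro image_eqI[of _ _ "w / w0"]) auto
  qed
  moreover have "N (w0 * k) = c" if "k \<in> KN" for k
    using that assms by (auto simp: KN_def N_mult)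
  ultimately show ?thesis by blast
qed

lemma card_N_fiber: "N w0 = c \<Longrightarrow> w0 \<noteq> 0 \<Longrightarrow> card {w. N w = c} = card KN"
  by (simp add: N_fiber card_image inj_on_def)

lemma card_KT: "card KT = q" and card_range_T: "card (range T) = q"
proof -
  have "card (UNIV::'a set) = card (range T) * card KT"
    by (rule fiber_count) (auto simp: card_T_fiber)
  moreover have "range T \<subseteq> F0" using T_F0 by auto
  hence rT: "card (range T) \<le> q" using card_F0_le card_mono[of F0] by (meson finite le_trans)
  ultimately have e: "q * q = card (range T) * card KT" by (simp add: card_F power2_eq_square)
  have k: "card KT \<le> q" by (rule card_KT_le)
  show "card KT = q"
  proof (rule ccontr)
    assume "card KT \<noteq> q" hence "card KT < q" using k by simp
    have "card (range T) * card KT \<le> q * card KT" using rT by (rule mult_le_mono1)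
    also have "\<dots> < q * q" using \<open>card KT < q\<close> q3 by simp
    finally show False using e by simp
  qed
  thus "card (range T) = q" using e q3 by simp
qed

lemma T_image: "range T = F0"
proof -
  have "range T \<subseteq> F0" using T_F0 by auto
  thus ?thesis using card_range_T card_F0_le by (metis card_seteq finite)
qed

lemma card_F0: "card F0 = q"
  using card_range_T T_image by simp

lemma card_KN: "card KN = q + 1"
proof -
  let ?A = "UNIV - {0::'a}"
  have fib: "card {x\<in>?A. N x = c} = card KN" if "c \<in> N ` ?A" for c
  proof -
    from that obtain w0 where w0A: "w0 \<in> ?A" and c: "c = N w0" by (rule imageE)
    have w0: "w0 \<noteq> 0" "N w0 = c" using w0A c by auto
    have "c \<noteq> 0" using w0 N_0_iff by metis
    have "{x\<in>?A. N x = c} = {w. N w = c}"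
    proof (rule Collect_cong)
      fix x show "(x \<in> ?A \<and> N x = c) = (N x = c)" using \<open>c \<noteq> 0\<close> N_0_iff[of x] by auto
    qed
    thus ?thesis using card_N_fiber[OF w0(2,1)] by simp
  qed
  have e: "card ?A = card (N ` ?A) * card KN" by (rule fiber_count[OF _ fib]) simp_all
  have "card ?A = q * q - 1" by (simp add: card_Diff_singleton card_F power2_eq_square)
  moreover have "N ` ?A \<subseteq> F0 - {0}" using N_F0 N_0_iff by auto
  hence "card (N ` ?A) \<le> card (F0 - {0})" by (intro card_mono) auto
  hence a: "card (N ` ?A) \<le> q - 1" using card_F0 by (simp add: F0_def card_Diff_singleton)
  ultimately have e2: "q * q - 1 = card (N ` ?A) * card KN" using e by simp
  show ?thesis
  proof (rule ccontr)
    assume "card KN \<noteq> q + 1" hence "card KN \<le> q" using card_KN_le by simp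
    hence "card (N ` ?A) * card KN \<le> (q - 1) * q" using a by (rule mult_le_mono[rotated])
    also have "(q - 1) * q = q * q - q" by (simp add: diff_mult_distrib)
    also have "q * q - q < q * q - 1"
    proof -
      have "q \<le> q * q" using q3 by simp
      thus ?thesis using q3 by linarith
    qed
    finally show False using e2 by simp
  qed
qed

end

lemma smul3_1: "smul3 1 v = v" by (cases v) (simp add: smul3_def)

lemma proj_pt_self: "v \<in> proj_pt v"
  unfolding proj_pt_def by (rule CollectI, rule exI[of _ 1]) (simp add: smul3_1)

lemma proj_pt_eqD: "proj_pt v = proj_pt w \<Longrightarrow> \<exists>c. c \<noteq> 0 \<and> v = smul3 c w"
  using proj_pt_self[of v] by (auto simp: proj_pt_def)

lemma dot3_smul: "dot3 u (smul3 c v) = c * dot3 u v"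
  by (cases u; cases v) (simp add: dot3_def smul3_def algebra_simps)
lemma dot3_smul_left: "dot3 (smul3 c u) v = c * dot3 u v"
  by (cases u; cases v) (simp add: dot3_def smul3_def algebra_simps)

lemma on_lineI: "v \<noteq> (0,0,0) \<Longrightarrow> dot3 u v = 0 \<Longrightarrow> proj_pt v \<in> pg_line u"
  unfolding pg_line_def by blast

lemma on_lineD:
  assumes "proj_pt v \<in> pg_line u" shows "dot3 u v = 0"
proof -
  obtain w where w: "proj_pt v = proj_pt w" "dot3 u w = 0" using assms by (auto simp: pg_line_def)
  then obtain c where "v = smul3 c w" using proj_pt_eqD by blast
  thus ?thesis using w by (simp add: dot3_smul)
qed

lemma pg_line_smul: assumes "c \<noteq> 0" shows "pg_line (smul3 c u) = pg_line u"
  using assms by (simp add: pg_line_def dot3_smul_left)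

lemma smul3_eq0: "c \<noteq> 0 \<Longrightarrow> smul3 c v = (0,0,0) \<longleftrightarrow> v = (0,0,0)"
  by (cases v) (simp add: smul3_def)

lemma lin1: fixes a s x z :: "'b::field" assumes "-a + s * x + z = 0" shows "z = a + (-s) * x"
proof -
  have "z + (-a + s * x) = 0" using assms by (simp add: ac_simps)
  hence "z = - (-a + s * x)" by (simp only: eq_neg_iff_add_eq_0)
  thus ?thesis by simp
qed
lemma lin2: fixes z s n :: "'b::field" assumes "z + s = - n" shows "z + n + (s + n) = n"
proof -
  have "z + n + (s + n) = (z + s) + n + n" by (simp add: algebra_simps)
  thus ?thesis using assms by simp
qed

context hq
begin

definition ap :: "'a \<Rightarrow> 'a \<Rightarrow> 'a vec3 set" where "ap x z = proj_pt (1, x, z)"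
definition Qinf :: "'a vec3 set" where "Qinf = proj_pt (0, 0, 1)"
definition onH :: "'a \<Rightarrow> 'a \<Rightarrow> bool" where "onH x z \<longleftrightarrow> T z + N x = 0"

lemma ap_inj: "ap x z = ap x' z' \<longleftrightarrow> x = x' \<and> z = z'"
proof
  assume "ap x z = ap x' z'"
  then obtain c where "c \<noteq> 0" "(1, x, z) = smul3 c (1, x', z')" using proj_pt_eqD[of "(1,x,z)" "(1,x',z')"] unfolding ap_def by blast
  thus "x = x' \<and> z = z'" by (simp add: smul3_def)
qed simp

lemma ap_ne_Qinf: "ap x z \<noteq> Qinf"
proof
  assume "ap x z = Qinf"
  then obtain c where "(1::'a, x, z) = smul3 c (0, 0, 1)" using proj_pt_eqD[of "(1,x,z)" "(0,0,1)"] unfolding ap_def Qinf_def by blast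
  thus False by (simp add: smul3_def)
qed

lemma ap_pt: "ap x z \<in> pg_points" unfolding ap_def pg_points_def
  by (rule CollectI, rule exI[of _ "(1,x,z)"]) simp
lemma Qinf_pt: "Qinf \<in> pg_points" unfolding Qinf_def pg_points_def
  by (rule CollectI, rule exI[of _ "(0,0,1)"]) simp

lemma ap_H: "onH x z \<Longrightarrow> ap x z \<in> hermitian_curve q"
  unfolding hermitian_curve_def ap_def
  by (rule CollectI, rule exI[of _ 1], rule exI[of _ x], rule exI[of _ z])
     (simp add: onH_def T_def N_def sig_def power_Suc2 mult.commute)

lemma Qinf_H: "Qinf \<in> hermitian_curve q"
  unfolding hermitian_curve_def Qinf_def using q3
  by (intro CollectI exI[of _ 0] exI[of _ 1]) (simp add: power_0_left)

lemma ap_on: "dot3 u (1, x, z) = 0 \<Longrightarrow> ap x z \<in> pg_line u"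
  unfolding ap_def by (rule on_lineI) auto

lemma ap_onD: "ap x z \<in> pg_line u \<Longrightarrow> dot3 u (1, x, z) = 0"
  unfolding ap_def by (rule on_lineD)

lemma key_id: "T (a + b * x) + N x = T a + N (x + sig b) - N b"
  unfolding T_def N_def sig_add sig_mult sig_sig by (simp add: algebra_simps)

lemma sig_N: "sig (N x) = N x" using N_F0 by (simp add: F0_def)

lemma T_N: "T (N x) = 2 * N x" by (simp add: T_def sig_N)

lemma N_uminus: "N (- x) = N x" by (simp add: N_def sig_uminus)

definition tv :: "'a \<Rightarrow> 'a \<Rightarrow> 'a vec3" where "tv x0 z0 = (-(z0 + N x0), sig x0, 1)"

lemma tangent_meets:
  assumes "onH x0 z0" "onH x z" "dot3 (tv x0 z0) (1, x, z) = 0"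
  shows "x = x0 \<and> z = z0"
proof -
  define a where "a = z0 + N x0"
  define b where "b = - sig x0"
  have d: "dot3 (tv x0 z0) (1, x, z) = -(z0 + N x0) + sig x0 * x + z" unfolding dot3_def tv_def by simp
  have d': "-(z0 + N x0) + sig x0 * x + z = 0" using assms(3) d by metis
  have z: "z = a + b * x" unfolding a_def b_def by (rule lin1[OF d'])
  have h0: "T (a + b * x) + N x = 0" using assms(2) z unfolding onH_def by metis
  have h: "T a + N (x + sig b) - N b = 0" using h0 key_id[of a b x] by metis
  have Tz0: "T z0 = - N x0" using assms(1) unfolding onH_def by (rule eq_neg_iff_add_eq_0[THEN iffD2])
  have Ta: "T a = N x0" unfolding a_def T_def sig_add sig_N using Tz0 unfolding T_def by (rule lin2)
  have Nb: "N b = N x0" unfolding b_def N_def sig_uminus sig_sig by simp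
  have sb: "sig b = - x0" unfolding b_def sig_uminus sig_sig ..
  have "N (x - x0) = 0" using h unfolding Ta Nb sb by simp
  hence "x = x0" by (simp add: N_0_iff)
  moreover have "z = z0" using z \<open>x = x0\<close> unfolding a_def b_def N_def by simp
  ultimately show ?thesis by simp
qed

end

context hq
begin

lemma dot_tv: "dot3 (tv x0 z0) (1, x, z) = -(z0 + N x0) + sig x0 * x + z"
  unfolding dot3_def tv_def by simp

lemma tv_ne0: "tv x0 z0 \<noteq> (0,0,0)" by (simp add: tv_def)

lemma P_on_tv: "ap x0 z0 \<in> pg_line (tv x0 z0)"
proof (rule ap_on)
  show "dot3 (tv x0 z0) (1, x0, z0) = 0" unfolding dot_tv N_def by (simp add: algebra_simps)
qed

lemma Qinf_not_tv: "Qinf \<notin> pg_line (tv x0 z0)"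
proof
  assume "Qinf \<in> pg_line (tv x0 z0)"
  hence "dot3 (tv x0 z0) (0, 0, 1) = 0" unfolding Qinf_def by (rule on_lineD)
  thus False by (simp add: dot3_def tv_def)
qed

lemma circle_card:
  assumes "N (x0 + \<beta>) = c" "c \<noteq> 0"
  shows "card {x. N (x + \<beta>) = c} = q + 1"
proof -
  have w0: "x0 + \<beta> \<noteq> 0" using assms N_0_iff by auto
  have e: "{x. N (x + \<beta>) = c} = (\<lambda>w. w - \<beta>) ` {w. N w = c}"
  proof -
    have "x \<in> (\<lambda>w. w - \<beta>) ` {w. N w = c}" if "N (x + \<beta>) = c" for x
      using that by (intro image_eqI[of _ _ "x + \<beta>"]) auto
    thus ?thesis by auto
  qed
  have "card {x. N (x + \<beta>) = c} = card {w. N w = c}"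
    unfolding e by (rule card_image) (simp add: inj_on_def)
  also have "\<dots> = card KN" by (rule card_N_fiber[OF assms(1) w0])
  finally show ?thesis using card_KN by simp
qed

lemma F0_uminus: "c \<in> F0 \<Longrightarrow> - c \<in> F0" by (simp add: F0_def sig_uminus)

lemma exists_onH: "\<exists>z. onH x z"
proof -
  have "- N x \<in> range T" using T_image N_F0 F0_uminus by simp
  then obtain z where "T z = - N x" by auto
  hence "T z + N x = 0" by simp
  thus ?thesis unfolding onH_def by blast
qed

end

locale hs = hq q sig for q and sig :: "'a::{finite,field} \<Rightarrow> 'a" +
  fixes S' :: "('a \<times> 'a) set" and D :: "'a set" and incQ :: bool
  assumes SH: "\<And>x z. (x,z) \<in> S' \<Longrightarrow> onH x z"
  and full: "\<And>x z. x \<notin> D \<Longrightarrow> onH x z \<Longrightarrow> (x,z) \<in> S'"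
  and col2: "\<And>x z. (x,z) \<in> S' \<Longrightarrow> \<exists>z'. z' \<noteq> z \<and> (x,z') \<in> S'"
  and circ: "\<And>\<beta> c. c \<noteq> 0 \<Longrightarrow> card ({x. N (x + \<beta>) = c} \<inter> D) \<le> q - 1"
  and incQ: "incQ \<Longrightarrow> D = {}"
begin

definition SS :: "'a vec3 set set" where
  "SS = (\<lambda>(x,z). ap x z) ` S' \<union> (if incQ then {Qinf} else {})"

lemma SS_cases:
  assumes "R \<in> SS"
  obtains x z where "(x,z) \<in> S'" "R = ap x z" | "incQ" "R = Qinf"
  using assms unfolding SS_def by (cases incQ) auto

lemma ap_SS: "(x,z) \<in> S' \<Longrightarrow> ap x z \<in> SS" unfolding SS_def by auto
lemma Qinf_SS: "incQ \<Longrightarrow> Qinf \<in> SS" unfolding SS_def by auto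

lemma aff_tangent:
  assumes P: "(x0,z0) \<in> S'"
  shows "SS \<inter> pg_line (tv x0 z0) = {ap x0 z0}"
proof -
  have "R \<in> {ap x0 z0}" if R: "R \<in> SS \<inter> pg_line (tv x0 z0)" for R
  proof -
  have "R \<in> SS" using R by simp
  thus "R \<in> {ap x0 z0}"
  proof (cases rule: SS_cases)
    case (1 x z)
    have "dot3 (tv x0 z0) (1, x, z) = 0" using R 1 ap_onD by simp
    hence "x = x0 \<and> z = z0" by (rule tangent_meets[OF SH[OF P] SH[OF 1(1)]])
    thus ?thesis using 1 by simp
  next
    case 2
    thus ?thesis using R Qinf_not_tv by simp
  qed
  qed
  moreover have "ap x0 z0 \<in> SS \<inter> pg_line (tv x0 z0)" using ap_SS[OF P] P_on_tv by simp
  ultimately show ?thesis by blast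
qed


lemma aff_unique:
  assumes P: "(x0,z0) \<in> S'" and u: "u \<noteq> (0,0,0)"
    and L: "SS \<inter> pg_line u = {ap x0 z0}"
  shows "pg_line u = pg_line (tv x0 z0)"
proof -
  obtain u0 u1 u2 where uu: "u = (u0, u1, u2)" by (cases u) auto
  have onl: "ap x z \<in> pg_line u \<Longrightarrow> (x,z) \<in> S' \<Longrightarrow> x = x0 \<and> z = z0" for x z
  proof -
    assume "ap x z \<in> pg_line u" "(x,z) \<in> S'"
    hence "ap x z \<in> SS \<inter> pg_line u" using ap_SS by simp
    hence "ap x z = ap x0 z0" using L by simp
    thus ?thesis using ap_inj by simp
  qed
  have "ap x0 z0 \<in> pg_line u" using L by auto
  hence "dot3 u (1, x0, z0) = 0" by (rule ap_onD)
  hence d0: "u0 + u1 * x0 + u2 * z0 = 0" using uu by (simp add: dot3_def)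
  show ?thesis
  proof (cases "u2 = 0")
    case True
    obtain z' where z': "z' \<noteq> z0" "(x0, z') \<in> S'" using col2[OF P] by auto
    have "dot3 u (1, x0, z') = 0" using d0 True uu by (simp add: dot3_def)
    hence "ap x0 z' \<in> pg_line u" by (rule ap_on)
    hence "z' = z0" using onl[OF _ z'(2)] by simp
    thus ?thesis using z'(1) by simp
  next
    case False
    define a where "a = - u0 / u2"
    define b where "b = - u1 / u2"
    have online: "dot3 u (1, x, a + b * x) = 0" for x
      using False uu unfolding a_def b_def dot3_def by (simp add: field_simps)
    have "- (u0 + u1 * x0) = u2 * z0" by (rule minus_unique) (use d0 in \<open>simp add: add.assoc\<close>)
    hence "z0 = - (u0 + u1 * x0) / u2" using False by (simp add: eq_divide_eq mult.commute)
    hence z0: "z0 = a + b * x0" unfolding a_def b_def using False by (simp add: field_simps)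
    define c where "c = N (x0 + sig b)"
    have H0: "T a + c - N b = 0"
    proof -
      have "T (a + b * x0) + N x0 = 0" using SH[OF P] z0 unfolding onH_def by simp
      thus ?thesis unfolding key_id c_def .
    qed
    show ?thesis
    proof (cases "c = 0")
      case True
      hence "x0 + sig b = 0" unfolding c_def using N_0_iff by simp
      hence "sig (x0 + sig b) = 0" by simp
      hence "sig x0 + b = 0" unfolding sig_add sig_sig .
      hence bb: "b = - sig x0" using minus_unique by metis
      have "u = smul3 u2 (tv x0 z0)"
      proof -
        have "u1 = u2 * sig x0" using bb False unfolding b_def by (simp add: field_simps)
        moreover have "u0 = u2 * (-(z0 + N x0))"
        proof -
          have "z0 = - u0 / u2 + (- sig x0) * x0" using z0 bb unfolding a_def by simp
          hence "z0 + sig x0 * x0 = - u0 / u2" by simp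
          hence "u2 * (z0 + sig x0 * x0) = - u0" using False by simp
          hence "u0 = - (u2 * (z0 + sig x0 * x0))" by simp
          thus ?thesis unfolding N_def by (simp add: algebra_simps)
        qed
        ultimately show ?thesis using uu by (simp add: smul3_def tv_def)
      qed
      thus ?thesis using pg_line_smul False by simp
    next
      case False
      let ?C = "{x. N (x + sig b) = c}"
      have cc: "card ?C = q + 1" by (rule circle_card[OF c_def[symmetric] False])
      have cd: "card (?C \<inter> D) \<le> q - 1" by (rule circ[OF False])
      have "card ?C = card (?C \<inter> D) + card (?C - D)"
        by (rule card_Int_Diff) simp
      hence c2: "card (?C - D) \<ge> 2" using cc cd q3 by linarith
      have "card (?C - D - {x0}) \<ge> 1"
      proof -
        have "card (?C - D) \<le> card (?C - D - {x0}) + 1"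
          by (cases "x0 \<in> ?C - D") (simp_all add: card_Diff_singleton)
        thus ?thesis using c2 by linarith
      qed
      hence "?C - D - {x0} \<noteq> {}" by (intro notI) simp
      then obtain x1 where x1: "x1 \<in> ?C - D - {x0}" by auto
      define z1 where "z1 = a + b * x1"
      have "onH x1 z1"
      proof -
        have "T z1 + N x1 = T a + c - N b" unfolding z1_def key_id using x1 by simp
        thus ?thesis unfolding onH_def using H0 by simp
      qed
      hence "(x1, z1) \<in> S'" using full x1 by simp
      moreover have "ap x1 z1 \<in> pg_line u" unfolding z1_def by (rule ap_on[OF online])
      ultimately have "x1 = x0" using onl by blast
      thus ?thesis using x1 by simp
    qed
  qed
qed

lemma Q_tangent:
  assumes "incQ" shows "SS \<inter> pg_line (1,0,0) = {Qinf}"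
proof -
  have "R \<in> {Qinf}" if R: "R \<in> SS \<inter> pg_line (1,0,0)" for R
  proof -
    have "R \<in> SS" using R by simp
    thus ?thesis
    proof (cases rule: SS_cases)
      case (1 x z)
      have "dot3 (1,0,0) (1, x, z) = 0" using R 1 ap_onD by simp
      thus ?thesis by (simp add: dot3_def)
    qed simp
  qed
  moreover have "Qinf \<in> pg_line (1,0,0)" unfolding Qinf_def
    by (rule on_lineI) (simp_all add: dot3_def)
  ultimately show ?thesis using Qinf_SS[OF assms] by auto
qed

lemma Q_unique:
  assumes Q: "incQ" and u: "u \<noteq> (0,0,0)" and L: "SS \<inter> pg_line u = {Qinf}"
  shows "pg_line u = pg_line (1,0,0)"
proof -
  obtain u0 u1 u2 where uu: "u = (u0, u1, u2)" by (cases u) auto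
  have "Qinf \<in> pg_line u" using L by auto
  hence "dot3 u (0,0,1) = 0" unfolding Qinf_def by (rule on_lineD)
  hence u2: "u2 = 0" using uu by (simp add: dot3_def)
  show ?thesis
  proof (cases "u1 = 0")
    case True
    hence "u0 \<noteq> 0" using u uu u2 by simp
    moreover have "u = smul3 u0 (1,0,0)" using uu u2 True by (simp add: smul3_def)
    ultimately show ?thesis using pg_line_smul by simp
  next
    case False
    define x where "x = - u0 / u1"
    obtain z where z: "onH x z" using exists_onH by blast
    have "(x, z) \<in> S'" using full[OF _ z] incQ[OF Q] by simp
    hence "ap x z \<in> SS" by (rule ap_SS)
    moreover have "ap x z \<in> pg_line u"
      by (rule ap_on) (use uu u2 False in \<open>simp add: dot3_def x_def field_simps\<close>)
    ultimately have "ap x z = Qinf" using L by blast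
    thus ?thesis using ap_ne_Qinf by simp
  qed
qed

lemma SS_semioval:
  assumes ne: "S' \<noteq> {} \<or> incQ"
  shows "semioval SS"
  unfolding semioval_def
proof (intro conjI ballI)
  show "SS \<noteq> {}" using ne unfolding SS_def by auto
  show "SS \<subseteq> pg_points" unfolding SS_def using ap_pt Qinf_pt by auto
next
  fix P assume "P \<in> SS"
  thus "\<exists>!l. l \<in> pg_lines \<and> SS \<inter> l = {P}"
  proof (cases rule: SS_cases)
    case (1 x0 z0)
    show ?thesis
    proof (rule ex1I[of _ "pg_line (tv x0 z0)"])
      show "pg_line (tv x0 z0) \<in> pg_lines \<and> SS \<inter> pg_line (tv x0 z0) = {P}"
      proof
        show "pg_line (tv x0 z0) \<in> pg_lines" unfolding pg_lines_def
          by (rule CollectI, rule exI[of _ "tv x0 z0"]) (simp add: tv_ne0)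
      qed (use aff_tangent[OF 1(1)] 1(2) in simp)
      fix l assume l: "l \<in> pg_lines \<and> SS \<inter> l = {P}"
      then obtain u where u: "u \<noteq> (0,0,0)" "l = pg_line u" unfolding pg_lines_def by blast
      show "l = pg_line (tv x0 z0)" using aff_unique[OF 1(1) u(1)] l u 1(2) by simp
    qed
  next
    case 2
    show ?thesis
    proof (rule ex1I[of _ "pg_line (1,0,0)"])
      show "pg_line (1,0,0) \<in> pg_lines \<and> SS \<inter> pg_line (1,0,0) = {P}"
      proof
        show "pg_line (1,0,0) \<in> pg_lines" unfolding pg_lines_def
          by (rule CollectI, rule exI[of _ "(1,0,0)"]) simp
      qed (use Q_tangent[OF 2(1)] 2(2) in simp)
      fix l assume l: "l \<in> pg_lines \<and> SS \<inter> l = {P}"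
      then obtain u where u: "u \<noteq> (0,0,0)" "l = pg_line u" unfolding pg_lines_def by blast
      show "l = pg_line (1,0,0)" using Q_unique[OF 2(1) u(1)] l u 2(2) by simp
    qed
  qed
qed

end

lemma choose_Z:
  fixes col :: "'i \<Rightarrow> 'b set" and I :: "'i set"
  assumes fin: "finite I" and cm: "\<And>i. card (col i) = m" and m3: "m \<ge> 3"
    and dj: "\<And>i j. i \<noteq> j \<Longrightarrow> col i \<inter> col j = {}"
  shows "n \<le> card I * m \<Longrightarrow> n \<noteq> 1 \<Longrightarrow>
    \<exists>Z. Z \<subseteq> (\<Union>i\<in>I. col i) \<and> card Z = n \<and> (\<forall>i\<in>I. card (Z \<inter> col i) \<noteq> 1)"
  using fin
proof (induction I arbitrary: n rule: finite_induct)
  case empty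
  thus ?case by (intro exI[of _ "{}"]) simp
next
  case (insert j I)
  have fcol: "finite (col i)" for i using cm[of i] m3 by (metis card.infinite not_numeral_le_zero)
  have djI: "Z \<inter> col j = {}" if ZI: "Z \<subseteq> (\<Union>i\<in>I. col i)" for Z
  proof -
    have False if z: "z \<in> Z" "z \<in> col j" for z
    proof -
      obtain i where i: "i \<in> I" "z \<in> col i" using ZI z(1) by blast
      hence "i \<noteq> j" using insert.hyps(2) by auto
      hence "col i \<inter> col j = {}" by (rule dj)
      thus False using i(2) z(2) by blast
    qed
    thus ?thesis by blast
  qed
  show ?case
  proof (cases "n \<le> card I * m")
    case True
    then obtain Z where Z: "Z \<subseteq> (\<Union>i\<in>I. col i)" "card Z = n" "\<forall>i\<in>I. card (Z \<inter> col i) \<noteq> 1"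
      using insert.IH insert.prems(2) by blast
    have "Z \<inter> col j = {}" using djI[OF Z(1)] .
    thus ?thesis using Z by (intro exI[of _ Z]) auto
  next
    case False
    have cI: "card (insert j I) = card I + 1" using insert.hyps by simp
    define r where "r = n - card I * m"
    have r1: "r \<ge> 1" "r \<le> m" using False insert.prems(1) cI unfolding r_def by auto
    have crI: "card I * m \<ge> 1" if "r = 1"
    proof (rule ccontr)
      assume "\<not> card I * m \<ge> 1"
      hence "card I * m = 0" by linarith
      hence "n = 1" using that unfolding r_def by (metis diff_zero)
      thus False using insert.prems(2) by simp
    qed
    define n0 where "n0 = (if r = 1 then card I * m - 1 else card I * m)"
    define r0 where "r0 = (if r = 1 then 2 else r)"
    have nn: "n = n0 + r0"
    proof (cases "r = 1")
      case True
      hence "card I * m \<ge> 1" by (rule crI)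
      thus ?thesis using True False unfolding n0_def r0_def r_def by auto
    next
      case f: False
      thus ?thesis using False unfolding n0_def r0_def r_def by auto
    qed
    have r0: "2 \<le> r0" "r0 \<le> m" using r1 m3 unfolding r0_def by auto
    have n0: "n0 \<le> card I * m" "n0 \<noteq> 1"
    proof -
      show "n0 \<le> card I * m" unfolding n0_def by auto
      show "n0 \<noteq> 1"
      proof (cases "r = 1")
        case True
        hence "card I * m \<ge> 1" by (rule crI)
        hence "card I \<ge> 1" by (cases "card I") auto
        hence "card I * m \<ge> 3" using m3 by (metis mult_1 mult_le_mono)
        thus ?thesis using True unfolding n0_def by auto
      next
        case f: False
        show ?thesis
        proof (cases "card I")
          case 0 thus ?thesis using f unfolding n0_def by simp
        next
          case (Suc k) hence "card I * m \<ge> 3" using m3 by (metis le_add1 mult_le_mono mult_1 Suc_eq_plus1_left le_trans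
                mult.commute plus_1_eq_Suc)
          thus ?thesis using f unfolding n0_def by auto
        qed
      qed
    qed
    obtain Z0 where Z0: "Z0 \<subseteq> (\<Union>i\<in>I. col i)" "card Z0 = n0" "\<forall>i\<in>I. card (Z0 \<inter> col i) \<noteq> 1"
      using insert.IH[OF n0] by blast
    obtain W where W: "W \<subseteq> col j" "card W = r0"
      using obtain_subset_with_card_n[of r0 "col j"] r0 cm[of j] by metis
    have Z0j: "Z0 \<inter> col j = {}" using djI[OF Z0(1)] .
    have WI: "W \<inter> col i = {}" if "i \<in> I" for i
      using W(1) dj[of j i] that insert.hyps(2) by blast
    have finZ0: "finite Z0" using Z0(1) insert.hyps(1) fcol by (meson finite_UN_I finite_subset)
    have finW: "finite W" using W(1) fcol finite_subset by blast
    show ?thesis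
    proof (intro exI[of _ "Z0 \<union> W"] conjI ballI)
      show "Z0 \<union> W \<subseteq> (\<Union>i\<in>insert j I. col i)" using Z0(1) W(1) by blast
      have "Z0 \<inter> W = {}" using Z0j W(1) by blast
      thus "card (Z0 \<union> W) = n" using card_Un_disjoint[OF finZ0 finW] Z0(2) W(2) nn by simp
      fix i assume i: "i \<in> insert j I"
      show "card ((Z0 \<union> W) \<inter> col i) \<noteq> 1"
      proof (cases "i = j")
        case True
        have "(Z0 \<union> W) \<inter> col i = W" using True Z0j W(1) by blast
        thus ?thesis using W(2) r0 by simp
      next
        case False
        hence iI: "i \<in> I" using i by simp
        have "(Z0 \<union> W) \<inter> col i = Z0 \<inter> col i" using WI[OF iI] by blast
        thus ?thesis using Z0(3) iI by simp
      qed
    qed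
  qed
qed

context hq
begin

lemma F0_add: "a \<in> F0 \<Longrightarrow> b \<in> F0 \<Longrightarrow> a + b \<in> F0" by (simp add: F0_def sig_add)
lemma F0_diff: "a \<in> F0 \<Longrightarrow> b \<in> F0 \<Longrightarrow> a - b \<in> F0" by (simp add: F0_def sig_diff)
lemma F0_divide: "a \<in> F0 \<Longrightarrow> b \<in> F0 \<Longrightarrow> a / b \<in> F0" by (simp add: F0_def sig_divide)

lemma exists_eps: "\<exists>e. e \<notin> F0"
proof (rule ccontr)
  assume "\<not> (\<exists>e. e \<notin> F0)"
  hence "F0 = UNIV" by auto
  hence "card F0 = card (UNIV :: 'a set)" by simp
  hence "q = q ^ 2" using card_F0 card_F by simp
  moreover have "q < q ^ 2" using q3 by (simp add: power2_eq_square)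
  ultimately show False by simp
qed

definition Dset :: "'a \<Rightarrow> 'a set \<Rightarrow> 'a set" where
  "Dset e E = (\<lambda>(s,f). s * e + f) ` (E \<times> F0)"

lemma card_Dset:
  assumes e: "e \<notin> F0" and E: "E \<subseteq> F0"
  shows "card (Dset e E) = card E * q"
proof -
  have "inj_on (\<lambda>(s,f). s * e + f) (E \<times> F0)"
  proof (rule inj_onI, clarify)
    fix s1 f1 s2 f2 assume a: "s1 \<in> E" "f1 \<in> F0" "s2 \<in> E" "f2 \<in> F0" "s1 * e + f1 = s2 * e + f2"
    show "s1 = s2 \<and> f1 = f2"
    proof (cases "s1 = s2")
      case True thus ?thesis using a(5) by simp
    next
      case False
      have "(s1 - s2) * e = f2 - f1" using a(5) by (simp add: algebra_simps)
      hence "e = (f2 - f1) / (s1 - s2)" using False by (simp add: field_simps)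
      moreover have "(f2 - f1) / (s1 - s2) \<in> F0" using a E by (intro F0_divide F0_diff) auto
      ultimately show ?thesis using e by simp
    qed
  qed
  hence "card (Dset e E) = card (E \<times> F0)" unfolding Dset_def by (rule card_image)
  thus ?thesis by (simp add: card_cartesian_product card_F0)
qed

lemma N_shift: "f \<in> F0 \<Longrightarrow> N (u + f) = f ^ 2 + f * T u + N u"
  by (simp add: N_def T_def F0_def sig_add power2_eq_square algebra_simps)

lemma circ_Dset:
  assumes E: "E \<subseteq> F0" "finite E"
  shows "card ({x. N (x + \<beta>) = c} \<inter> Dset e E) \<le> 2 * card E"
proof -
  define R where "R s = {f. f ^ 2 = (- T (s * e + \<beta>)) * f + (c - N (s * e + \<beta>))}" for s
  have sub: "{x. N (x + \<beta>) = c} \<inter> Dset e E \<subseteq> (\<Union>s\<in>E. (\<lambda>f. s * e + f) ` R s)"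
  proof
    fix x assume x: "x \<in> {x. N (x + \<beta>) = c} \<inter> Dset e E"
    then obtain s f where sf: "s \<in> E" "f \<in> F0" "x = s * e + f" unfolding Dset_def by auto
    have "N ((s * e + \<beta>) + f) = c" using x sf(3) by (simp add: algebra_simps)
    hence "f ^ 2 + f * T (s * e + \<beta>) + N (s * e + \<beta>) = c" using N_shift[OF sf(2)] by simp
    hence "f \<in> R s" unfolding R_def by (simp add: algebra_simps)
    thus "x \<in> (\<Union>s\<in>E. (\<lambda>f. s * e + f) ` R s)" using sf by blast
  qed
  have "card ({x. N (x + \<beta>) = c} \<inter> Dset e E) \<le> card (\<Union>s\<in>E. (\<lambda>f. s * e + f) ` R s)"
    by (rule card_mono[OF _ sub]) simp
  also have "\<dots> \<le> (\<Sum>s\<in>E. card ((\<lambda>f. s * e + f) ` R s))" by (rule card_UN_le[OF E(2)])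
  also have "\<dots> \<le> (\<Sum>s\<in>E. 2)"
  proof (rule sum_mono)
    fix s assume "s \<in> E"
    have "card ((\<lambda>f. s * e + f) ` R s) \<le> card (R s)" by (rule card_image_le) simp
    also have "\<dots> \<le> 2" unfolding R_def by (rule card_pow_roots) simp
    finally show "card ((\<lambda>f. s * e + f) ` R s) \<le> 2" .
  qed
  finally show ?thesis by simp
qed

definition col :: "'a \<Rightarrow> ('a \<times> 'a) set" where "col x = Pair x ` {z. onH x z}"

lemma card_col: "card (col x) = q"
proof -
  obtain z0 where "onH x z0" using exists_onH by blast
  hence z0: "T z0 = - N x" unfolding onH_def by (simp add: eq_neg_iff_add_eq_0)
  have "{z. onH x z} = {z. T z = - N x}" unfolding onH_def by (simp add: eq_neg_iff_add_eq_0)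
  hence "card {z. onH x z} = card KT" using card_T_fiber[OF z0] by simp
  hence "card {z. onH x z} = q" using card_KT by simp
  thus ?thesis unfolding col_def by (subst card_image) (simp_all add: inj_on_def)
qed

lemma col_dj: "x \<noteq> y \<Longrightarrow> col x \<inter> col y = {}" unfolding col_def by auto

lemma construct:
  assumes t: "2 * t \<le> q - 1" and n: "n \<le> t * q * q" "n \<noteq> 1"
  shows "\<exists>S::'a vec3 set set. S \<subseteq> hermitian_curve q \<and> semioval S \<and> card S = (q * q - t * q) * q + n"
proof -
  obtain e where e: "e \<notin> F0" using exists_eps by blast
  have "t \<le> card F0" using t card_F0 by simp
  then obtain E where E: "E \<subseteq> F0" "card E = t" "finite E" by (rule obtain_subset_with_card_n)
  define D where "D = Dset e E"
  have cD: "card D = t * q" using card_Dset[OF e E(1)] E(2) unfolding D_def by simp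
  have fD: "finite D" by simp
  have "n \<le> card D * q" using n(1) cD by simp
  then obtain Z where Z: "Z \<subseteq> (\<Union>x\<in>D. col x)" "card Z = n" "\<forall>x\<in>D. card (Z \<inter> col x) \<noteq> 1"
    using choose_Z[of D col q n, OF fD card_col q3 col_dj] n(2) by blast
  have Zsub: "x \<in> D \<and> onH x z" if "(x,z) \<in> Z" for x z
    using that Z(1) unfolding col_def by auto
  define S' where "S' = {(x,z). x \<notin> D \<and> onH x z} \<union> Z"
  have hs: "hs q sig S' D False"
  proof (rule hs.intro[OF hq_axioms], rule hs_axioms.intro)
    show "onH x z" if "(x,z) \<in> S'" for x z using that Zsub unfolding S'_def by auto
    show "(x,z) \<in> S'" if "x \<notin> D" "onH x z" for x z using that unfolding S'_def by simp
    show "card ({x. N (x + \<beta>) = c} \<inter> D) \<le> q - 1" if "c \<noteq> 0" for \<beta> c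
      using circ_Dset[OF E(1) E(3), of \<beta> c e] E(2) t unfolding D_def by simp
    show "False \<Longrightarrow> D = {}" by simp
    show "\<exists>z'. z' \<noteq> z \<and> (x,z') \<in> S'" if xz: "(x,z) \<in> S'" for x z
    proof (cases "x \<in> D")
      case False
      have "card (col x - {(x,z)}) \<ge> 2" using card_col[of x] q3
        by (cases "(x,z) \<in> col x") (simp_all add: card_Diff_singleton)
      hence "col x - {(x,z)} \<noteq> {}" by (intro notI) simp
      then obtain p where p: "p \<in> col x" "p \<noteq> (x,z)" by blast
      then obtain z' where z': "p = (x, z')" "onH x z'" unfolding col_def by auto
      show ?thesis using p z' False unfolding S'_def by (intro exI[of _ z']) auto
    next
      case True
      hence xzZ: "(x,z) \<in> Z" using xz unfolding S'_def by auto
      have "(x,z) \<in> col x" using Zsub[OF xzZ] unfolding col_def by auto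
      hence inZ: "(x,z) \<in> Z \<inter> col x" using xzZ by simp
      have fin: "finite (Z \<inter> col x)" by simp
      have "card (Z \<inter> col x) > 0" using inZ fin card_gt_0_iff by blast
      moreover have "card (Z \<inter> col x) \<noteq> 1" using Z(3) True by blast
      ultimately have "card (Z \<inter> col x) \<ge> 2" by arith
      hence "card (Z \<inter> col x - {(x,z)}) \<ge> 1" using inZ fin by (simp add: card_Diff_singleton)
      hence "Z \<inter> col x - {(x,z)} \<noteq> {}" by (intro notI) simp
      then obtain p where p: "p \<in> Z" "p \<in> col x" "p \<noteq> (x,z)" by blast
      then obtain z' where z': "p = (x, z')" unfolding col_def by auto
      show ?thesis using p z' unfolding S'_def by (intro exI[of _ z']) auto
    qed
  qed
  interpret H: hs q sig S' D False by (rule hs)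
  have "t < q" using t q3 by linarith
  hence "t * q < q * q" using q3 by (intro mult_strict_right_mono) auto
  hence cDU: "card D < card (UNIV :: 'a set)" using cD card_F by (simp add: power2_eq_square)
  have "UNIV - D \<noteq> {}"
  proof
    assume "UNIV - D = {}" hence "D = UNIV" by auto
    thus False using cDU by simp
  qed
  then obtain x0 where "x0 \<notin> D" by blast
  moreover obtain z0 where "onH x0 z0" using exists_onH by blast
  ultimately have ne: "S' \<noteq> {}" unfolding S'_def by blast
  define P1 where "P1 = {(x,z). x \<notin> D \<and> onH x z}"
  have P1: "P1 = (\<Union>x\<in>UNIV - D. col x)" unfolding P1_def col_def by auto
  have cP1: "card P1 = (q * q - t * q) * q"
  proof -
    have "card P1 = (\<Sum>x\<in>UNIV - D. card (col x))" unfolding P1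
      by (rule card_UN_disjoint) (auto simp: col_dj)
    also have "\<dots> = card (UNIV - D) * q" by (simp add: card_col)
    also have "card (UNIV - D) = q * q - t * q" using card_Diff_subset[OF fD] cD card_F
      by (simp add: power2_eq_square)
    finally show ?thesis .
  qed
  have cS': "card S' = (q * q - t * q) * q + n"
  proof -
    have "P1 \<inter> Z = {}" using Zsub unfolding P1_def by auto
    hence "card (P1 \<union> Z) = card P1 + card Z" by (intro card_Un_disjoint) simp_all
    thus ?thesis using cP1 Z(2) unfolding S'_def P1_def by simp
  qed
  have SS: "H.SS = (\<lambda>(x,z). ap x z) ` S'" unfolding H.SS_def by simp
  show ?thesis
  proof (intro exI[of _ H.SS] conjI)
    show "H.SS \<subseteq> hermitian_curve q" unfolding SS using H.SH ap_H by auto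
    show "semioval H.SS" using H.SS_semioval ne by simp
    have "inj_on (\<lambda>(x,z). ap x z) S'" by (auto simp: inj_on_def ap_inj)
    hence "card H.SS = card S'" unfolding SS by (rule card_image)
    thus "card H.SS = (q * q - t * q) * q + n" using cS' by simp
  qed
qed

lemma construct_full:
  "\<exists>S::'a vec3 set set. S \<subseteq> hermitian_curve q \<and> semioval S \<and> card S = q * q * q + 1"
proof -
  define S' where "S' = {(x,z). onH x z}"
  have hs: "hs q sig S' {} True"
  proof (rule hs.intro[OF hq_axioms], rule hs_axioms.intro)
    show "onH x z" if "(x,z) \<in> S'" for x z using that unfolding S'_def by auto
    show "(x,z) \<in> S'" if "x \<notin> {}" "onH x z" for x z using that unfolding S'_def by simp
    show "card ({x. N (x + \<beta>) = c} \<inter> {}) \<le> q - 1" for \<beta> c by simp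
    show "True \<Longrightarrow> {} = {}" by simp
    show "\<exists>z'. z' \<noteq> z \<and> (x,z') \<in> S'" if xz: "(x,z) \<in> S'" for x z
    proof -
      have "card (col x - {(x,z)}) \<ge> 2" using card_col[of x] q3
        by (cases "(x,z) \<in> col x") (simp_all add: card_Diff_singleton)
      hence "col x - {(x,z)} \<noteq> {}" by (intro notI) simp
      then obtain p where p: "p \<in> col x" "p \<noteq> (x,z)" by blast
      then obtain z' where z': "p = (x, z')" "onH x z'" unfolding col_def by auto
      show ?thesis using p z' unfolding S'_def by (intro exI[of _ z']) auto
    qed
  qed
  interpret H: hs q sig S' "{}" True by (rule hs)
  have P1: "S' = (\<Union>x\<in>UNIV. col x)" unfolding S'_def col_def by auto
  have cS': "card S' = q * q * q"
  proof -
    have "card S' = (\<Sum>x\<in>UNIV. card (col x))" unfolding P1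
      by (rule card_UN_disjoint) (auto simp: col_dj)
    also have "\<dots> = card (UNIV::'a set) * q" by (simp add: card_col)
    finally show ?thesis using card_F by (simp add: power2_eq_square)
  qed
  have SS: "H.SS = insert Qinf ((\<lambda>(x,z). ap x z) ` S')" unfolding H.SS_def by auto
  show ?thesis
  proof (intro exI[of _ H.SS] conjI)
    show "H.SS \<subseteq> hermitian_curve q" unfolding SS using H.SH ap_H Qinf_H by auto
    show "semioval H.SS" using H.SS_semioval by simp
    have "inj_on (\<lambda>(x,z). ap x z) S'" by (auto simp: inj_on_def ap_inj)
    hence "card ((\<lambda>(x,z). ap x z) ` S') = card S'" by (rule card_image)
    moreover have "Qinf \<notin> (\<lambda>(x,z). ap x z) ` S'" using ap_ne_Qinf by auto
    ultimately show "card H.SS = q * q * q + 1" unfolding SS using cS' by simp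
  qed
qed

end


lemma arith_odd:
  fixes q k t :: nat
  assumes "q = 2 * t + 1" "q \<ge> 3" "q ^ 3 + 2 * q ^ 2 + 2 \<le> 2 * k + q"
  shows "(q * q - t * q) * q + 2 \<le> k"
proof -
  have "q * q - t * q = q * (t + 1)" using assms(1) by (simp add: algebra_simps)
  hence B: "2 * ((q * q - t * q) * q) = q * q * q + q * q" using assms(1) by (simp add: algebra_simps)
  have "q * q \<ge> 3 * q" using assms(2) by simp
  moreover have "q ^ 3 = q * q * q" "q ^ 2 = q * q" by (simp_all add: power3_eq_cube power2_eq_square)
  ultimately show ?thesis using B assms(2,3) by linarith
qed

lemma arith_even:
  fixes q k t :: nat
  assumes "q = 2 * t + 2" "q \<ge> 3" "q ^ 3 + 3 * q ^ 2 + 2 \<le> 2 * k + 2 * q"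
  shows "(q * q - t * q) * q + 2 \<le> k"
proof -
  have "q * q - t * q = q * (t + 2)" using assms(1) by (simp add: algebra_simps)
  hence B: "2 * ((q * q - t * q) * q) = q * q * q + 2 * (q * q)" using assms(1) by (simp add: algebra_simps)
  have "q * q \<ge> 3 * q" using assms(2) by simp
  moreover have "q ^ 3 = q * q * q" "q ^ 2 = q * q" by (simp_all add: power3_eq_cube power2_eq_square)
  ultimately show ?thesis using B assms(2,3) by linarith
qed

theorem mainTheorem5:
  fixes q k :: nat
  assumes "primepow q" and "q > 2"
    and "card (UNIV :: 'a::{finite, field} set) = q ^ 2"
    and "k \<le> q ^ 3 + 1"
    and "odd q \<Longrightarrow> real k \<ge> (real q ^ 3 + 2 * real q ^ 2 - real q + 2) / 2"
    and "even q \<Longrightarrow> real k \<ge> (real q ^ 3 + 3 * real q ^ 2 - 2 * real q + 2) / 2"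
  shows "\<exists>S :: 'a vec3 set set. S \<subseteq> hermitian_curve q \<and> semioval S \<and> card S = k"
proof -
  obtain p e where pe: "prime p" "e > 0" "q = p ^ e" using assms(1) unfolding primepow_def by blast
  have cpos: "CHAR('a) > 0" by (rule finite_imp_CHAR_pos) simp
  have cpr: "prime CHAR('a)" by (rule prime_CHAR_semidom[OF cpos])
  have "CHAR('a) dvd card (UNIV :: 'a set)" by (rule CHAR_dvd_CARD)
  hence "CHAR('a) dvd p ^ (e * 2)" using assms(3) pe(3) by (simp add: power_mult)
  hence "CHAR('a) dvd p" using cpr by (rule prime_dvd_power[rotated])
  hence cp: "CHAR('a) = p" by (rule primes_dvd_imp_eq[OF cpr pe(1)])
  have fresh: "(x + y) ^ q = x ^ q + y ^ q" for x y :: 'a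
    by (rule freshmans_dream'[of q e]) (use cpr cp pe(3) in simp_all)
  interpret hq q "\<lambda>x::'a. x ^ q"
    by (rule hq.intro) (use assms(2,3) fresh in auto)
  show ?thesis
  proof (cases "k = q ^ 3 + 1")
    case True
    thus ?thesis using construct_full by (simp add: power3_eq_cube)
  next
    case False
    hence kq: "k \<le> q * q * q" using assms(4) by (simp add: power3_eq_cube)
    define t where "t = (q - 1) div 2"
    have t: "2 * t \<le> q - 1" unfolding t_def by simp
    have "t \<le> q" using t by linarith
    hence tq: "t * q \<le> q * q" by (rule mult_le_mono1)
    have lower: "(q * q - t * q) * q + 2 \<le> k"
    proof (cases "odd q")
      case True
      have qt: "q = 2 * t + 1" using True unfolding t_def by presburger
      have "real (q ^ 3 + 2 * q ^ 2 + 2) \<le> real (2 * k + q)" using assms(5)[OF True] by simp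
      hence "q ^ 3 + 2 * q ^ 2 + 2 \<le> 2 * k + q" by (simp only: of_nat_le_iff)
      thus ?thesis using arith_odd qt assms(2) by simp
    next
      case False
      have qt: "q = 2 * t + 2" using False assms(2) unfolding t_def by presburger
      have "real (q ^ 3 + 3 * q ^ 2 + 2) \<le> real (2 * k + 2 * q)" using assms(6) False by simp
      hence "q ^ 3 + 3 * q ^ 2 + 2 \<le> 2 * k + 2 * q" by (simp only: of_nat_le_iff)
      thus ?thesis using arith_even qt assms(2) by simp
    qed
    define n where "n = k - (q * q - t * q) * q"
    have kn: "k = (q * q - t * q) * q + n" using lower unfolding n_def by simp
    have "(q * q - t * q) * q + t * q * q = q * q * q"
      using tq by (simp add: diff_mult_distrib algebra_simps)
    hence n1: "n \<le> t * q * q" using kq kn by linarith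
    have n2: "n \<noteq> 1" using lower kn by linarith
    show ?thesis using construct[OF t n1 n2] kn by simp
  qed
qed


end
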